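(* Let $\mathbb F$ be a field and let $(S_1,m_1),\dots,(S_n,m_n)$ be finite multisets in $\mathbb F$ such that $0\in S_i$ and $m_i(0)=1$ for every $i$. Put $S=S_1\times\dots\times S_n$ and $d(S_i)=\sum_{s\in S_i}m_i(s)$. Let $H_1,\dots,H_k$ be hyperplanes in $\mathbb F^n$ such that every point $\mathbf s\in S\setminus\{\mathbf 0\}$ is contained in at least $|m(\mathbf s)|-n+1$ of the hyperplanes $H_1,\dots,H_k$, and $\mathbf 0$ is contained in none of them. Then $k\ge d(S_1)+\dots+d(S_n)-n$.
   Context: A multiset $(S_i,m_i)$ consists of a nonempty finite subset $S_i\subseteq\mathbb F$ and multiplicities $m_i:S_i\to\{1,2,\dots\}$. For $\mathbf s=(s_1,\dots,s_n)\in S$, $|m(\mathbf s)|=m_1(s_1)+\dots+m_n(s_n)$. A hyperplane in $\mathbb F^n$ is the zero set of a polynomial $a_1x_1+\dots+a_nx_n-b$ with $a_i,b\in\mathbb F$, not all $a_i$ zero. *)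

theory Defs
  imports "HOL-Library.FuncSet"
begin

text \<open>Points of F^n are functions nat => F restricted to the index set {..<n}
 (extensional, via PiE).\<close>

definition on_hyperplane :: "nat \<Rightarrow> (nat \<Rightarrow> 'a::field) \<Rightarrow> 'a \<Rightarrow> (nat \<Rightarrow> 'a) \<Rightarrow> bool" where
  "on_hyperplane n a b x \<longleftrightarrow> (\<Sum>i<n. a i * x i) = b"

definition is_hyperplane :: "nat \<Rightarrow> (nat \<Rightarrow> 'a::field) \<Rightarrow> bool" where
  "is_hyperplane n a \<longleftrightarrow> (\<exists>i<n. a i \<noteq> 0)"

end

theory Submission
  imports Defs "HOL-Computational_Algebra.Computational_Algebra"
begin


definition tc :: "nat \<Rightarrow> 'a::field poly \<Rightarrow> 'a \<Rightarrow> 'a" where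
  "tc b f t = coeff (pcompose f [:t,1:]) b"

lemma tc_add: "tc b (f + g) t = tc b f t + tc b g t"
  by (simp add: tc_def pcompose_add)
lemma tc_diff: "tc b (f - g) t = tc b f t - tc b g t"
  by (simp add: tc_def pcompose_diff)
lemma tc_smult: "tc b (smult c f) t = c * tc b f t"
  by (simp add: tc_def pcompose_smult)
lemma tc_sum: "tc b (sum F A) t = (\<Sum>x\<in>A. tc b (F x) t)"
  by (simp add: tc_def pcompose_sum coeff_sum)

lemma pcompose_power: "pcompose (p ^ k) r = (pcompose p r) ^ k"
  by (induction k) (simp_all add: pcompose_mult pcompose_1)

lemma lin_comp: "pcompose [:-t, 1:] [:t, 1:] = [:0, 1::'a::field:]"
  by (simp add: pcompose_pCons)
lemma lin_comp2: "pcompose [:t, 1:] [:-t, 1:] = [:0, 1::'a::field:]"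
  by (simp add: pcompose_pCons)

lemma lin_pow_comp: "pcompose ([:-t, 1:] ^ k) [:t, 1:] = monom (1::'a::field) k"
  by (simp add: pcompose_power lin_comp monom_altdef)

lemma tc_dvd:
  assumes "[:-t,1:] ^ m dvd f" "b < m"
  shows "tc b f t = 0"
proof -
  obtain q where "f = [:-t,1:] ^ m * q" using assms(1) by blast
  then have "pcompose f [:t,1:] = monom 1 m * pcompose q [:t,1:]"
    by (simp add: pcompose_mult lin_pow_comp)
  then show ?thesis using assms(2) by (simp add: tc_def coeff_monom_mult)
qed

lemma tc_dvd_conv:
  assumes "\<And>b. b < m \<Longrightarrow> tc b f t = 0"
  shows "[:-t,1:] ^ m dvd f"
proof -
  have "monom 1 m dvd pcompose f [:t,1:]"
    using assms by (simp add: monom_1_dvd_iff' tc_def)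
  then obtain Q where Q: "pcompose f [:t,1:] = monom 1 m * Q" by blast
  have "f = pcompose (pcompose f [:t,1:]) [:-t,1:]"
    by (simp add: pcompose_assoc[symmetric] lin_comp2)
  also have "\<dots> = pcompose (monom 1 m) [:-t,1:] * pcompose Q [:-t,1:]"
    by (simp add: Q pcompose_mult)
  also have "pcompose (monom 1 m) [:-t,1:] = [:-t,1:] ^ m"
    by (simp add: monom_altdef pcompose_power pcompose_pCons)
  finally show ?thesis by (metis dvd_triv_left)
qed

lemma tc_pow_self: "tc b ([:-t,1:] ^ k) t = (if b = k then 1 else 0)"
  by (simp add: tc_def lin_pow_comp)

lemma tc_monom: "tc b (monom 1 e) t = of_nat (e choose b) * t ^ (e - b)"
proof -
  have "pcompose (monom 1 e) [:t,1:] = [:t,1:] ^ e"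
    by (simp add: monom_altdef pcompose_power pcompose_pCons)
  moreover have "coeff ([:t,1:] ^ e) b = of_nat (e choose b) * t ^ (e - b)"
  proof (cases "b \<le> e")
    case True then show ?thesis by (simp add: coeff_linear_poly_power)
  next
    case False
    then have "coeff ([:t,1:] ^ e) b = 0"
      by (intro coeff_eq_0) (simp add: degree_linear_power)
    then show ?thesis using False by (simp add: binomial_eq_0)
  qed
  ultimately show ?thesis by (simp add: tc_def)
qed

lemma prod_lin_dvd:
  assumes "finite A" "\<And>u. u \<in> A \<Longrightarrow> [:-u,1:] ^ (m u) dvd f"
  shows "(\<Prod>u\<in>A. [:-u,1::'a::field:] ^ (m u)) dvd f"
  using assms
proof (induction A arbitrary: f rule: finite_induct)
  case empty then show ?case by simp
next
  case (insert x A)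
  show ?case
  proof (cases "f = 0")
    case True then show ?thesis by simp
  next
    case False
    obtain q where q: "f = [:-x,1:] ^ m x * q" using insert.prems by blast
    have "[:-u,1:] ^ (m u) dvd q" if "u \<in> A" for u
    proof -
      have ux: "u \<noteq> x" using that insert.hyps by auto
      have "m u \<le> order u f" using insert.prems[of u] that False by (simp add: order_divides)
      also have "order u f = order u ([:-x,1:] ^ m x) + order u q"
        using q False by (simp add: order_mult)
      also have "order u ([:-x,1:] ^ m x) = 0"
        using ux by (intro order_0I) (simp add: poly_power)
      finally show ?thesis by (simp add: order_divides)
    qed
    then have "(\<Prod>u\<in>A. [:-u,1:] ^ (m u)) dvd q" using insert.IH by blast
    then show ?thesis using insert.hyps q by (simp add: mult_dvd_mono)
  qed
qed

lemma degree_prod_lin: "finite A \<Longrightarrow> degree (\<Prod>u\<in>A. [:-u,1::'a::field:] ^ (m u)) = (\<Sum>u\<in>A. m u)"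
  by (subst degree_prod_sum_eq) (auto simp: degree_linear_power)

lemma zero_data:
  fixes f :: "'a::field poly"
  assumes "finite S" "degree f < (\<Sum>u\<in>S. m u)"
    "\<And>u g. u \<in> S \<Longrightarrow> g < m u \<Longrightarrow> tc g f u = 0"
  shows "f = 0"
proof (rule ccontr)
  assume "f \<noteq> 0"
  have "(\<Prod>u\<in>S. [:-u,1:] ^ (m u)) dvd f" using assms by (intro prod_lin_dvd tc_dvd_conv) auto
  then have "degree (\<Prod>u\<in>S. [:-u,1:] ^ (m u)) \<le> degree f"
    using \<open>f \<noteq> 0\<close> by (rule dvd_imp_degree_le)
  then show False using assms degree_prod_lin[of S m] by simp
qed

lemma tc_dvd_prod:
  assumes "finite S" "u \<in> S" "g < m u"
  shows "tc g ((\<Prod>v\<in>S. [:-v,1:] ^ (m v)) * q) u = 0"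
proof -
  have "[:-u,1:] ^ m u dvd (\<Prod>v\<in>S. [:-v,1:] ^ (m v))" using assms by (intro dvd_prodI)
  then have "[:-u,1:] ^ m u dvd (\<Prod>v\<in>S. [:-v,1:] ^ (m v)) * q" by simp
  then show ?thesis using assms by (intro tc_dvd)
qed

lemma inv_trunc:
  assumes "coeff H 0 \<noteq> (0::'a::field)"
  shows "\<exists>W. \<forall>k<N. coeff (H * W) k = (if k = 0 then 1 else 0)"
proof (induction N)
  case 0 then show ?case by simp
next
  case (Suc N)
  then obtain W where W: "\<forall>k<N. coeff (H * W) k = (if k = 0 then 1 else 0)" by blast
  define c where "c = (if N = 0 then 1 else 0) - coeff (H * W) N"
  define W' where "W' = W + monom (c / coeff H 0) N"
  have "coeff (H * W') k = coeff (H * W) k + (if k < N then 0 else c / coeff H 0 * coeff H (k - N))" for k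
    unfolding W'_def by (simp add: distrib_left mult.commute[of H "monom _ _"] coeff_monom_mult)
  then have "\<forall>k<Suc N. coeff (H * W') k = (if k = 0 then 1 else 0)"
    using W assms by (auto simp: c_def less_Suc_eq)
  then show ?case by blast
qed

lemma hermite_basis:
  fixes S :: "'a::field set"
  assumes "finite S" "t \<in> S" "b < m t"
  shows "\<exists>\<phi>. degree \<phi> < (\<Sum>u\<in>S. m u) \<and>
    (\<forall>u\<in>S. \<forall>g<m u. tc g \<phi> u = (if u = t \<and> g = b then 1 else 0))"
proof -
  define h where "h = (\<Prod>u\<in>S-{t}. [:-u,1:] ^ (m u))"
  define G where "G = (\<Prod>u\<in>S. [:-u,1:] ^ (m u))"
  have G: "G = [:-t,1:] ^ m t * h"
    unfolding G_def h_def using assms by (simp add: prod.remove)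
  have "poly h t \<noteq> 0" unfolding h_def using assms by (simp add: poly_prod)
  then have "coeff (pcompose h [:t,1:]) 0 \<noteq> 0" by simp
  then obtain W where W: "\<forall>k<m t. coeff (pcompose h [:t,1:] * W) k = (if k = 0 then 1 else 0)"
    using inv_trunc by blast
  define w where "w = pcompose W [:-t,1:]"
  have hw: "pcompose (h * w) [:t,1:] = pcompose h [:t,1:] * W"
    unfolding w_def by (simp add: pcompose_mult pcompose_assoc[symmetric] lin_comp)
  define \<psi> where "\<psi> = [:-t,1:] ^ b * (h * w)"
  define \<phi> where "\<phi> = \<psi> mod G"
  have Gnz: "G \<noteq> 0" unfolding G_def using assms by (auto)
  have pos: "(\<Sum>u\<in>S. m u) > 0" using assms by (metis gr_zeroI less_nat_zero_code sum_eq_0_iff)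
  have degG: "degree G = (\<Sum>u\<in>S. m u)" unfolding G_def using assms by (simp add: degree_prod_lin)
  have "degree \<phi> < (\<Sum>u\<in>S. m u)"
  proof (cases "\<phi> = 0")
    case True then show ?thesis using pos by simp
  next
    case False then show ?thesis unfolding \<phi>_def using degree_mod_less'[OF Gnz] degG by (simp add: \<phi>_def)
  qed
  moreover have "tc g \<phi> u = (if u = t \<and> g = b then 1 else 0)" if "u \<in> S" "g < m u" for u g
  proof -
    have "\<phi> = \<psi> - G * (\<psi> div G)" unfolding \<phi>_def
      by (metis minus_div_mult_eq_mod mult.commute)
    then have "tc g \<phi> u = tc g \<psi> u" using tc_dvd_prod[of S u g m, OF assms(1) that] unfolding G_def by (simp add: tc_diff)
    also have "tc g \<psi> u = (if u = t \<and> g = b then 1 else 0)"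
    proof (cases "u = t")
      case True
      have "tc g \<psi> u = coeff (monom 1 b * (pcompose h [:t,1:] * W)) g"
        unfolding tc_def \<psi>_def True by (simp only: pcompose_mult lin_pow_comp hw[unfolded pcompose_mult])
      also have "\<dots> = (if g = b then 1 else 0)"
        using W that True assms by (auto simp: coeff_monom_mult)
      finally show ?thesis using True by simp
    next
      case False
      have "[:-u,1:] ^ m u dvd h" unfolding h_def using that False assms by (intro dvd_prodI) auto
      then have "[:-u,1:] ^ m u dvd \<psi>" unfolding \<psi>_def by (metis dvd_mult2 dvd_mult)
      then show ?thesis using False that by (simp add: tc_dvd)
    qed
    finally show ?thesis .
  qed
  ultimately show ?thesis by blast
qed

lemma univ_functional:
  fixes S :: "'a::field set" and m :: "'a \<Rightarrow> nat"
  assumes fin: "finite S" and z: "0 \<in> S" and m0: "m 0 = 1"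
  shows "\<exists>c. c 0 0 \<noteq> 0 \<and> (\<forall>e. Suc e < (\<Sum>t\<in>S. m t) \<longrightarrow>
      (\<Sum>t\<in>S. \<Sum>b<m t. c t b * (of_nat (e choose b) * t ^ (e - b))) = 0)"
proof -
  define d where "d = (\<Sum>t\<in>S. m t)"
  define P where "P = (\<lambda>t b \<phi>. degree \<phi> < d \<and>
    (\<forall>u\<in>S. \<forall>g<m u. tc g \<phi> u = (if u = t \<and> g = b then 1 else (0::'a))))"
  define \<phi> where "\<phi> = (\<lambda>t b. SOME \<phi>. P t b \<phi>)"
  have \<phi>: "P t b (\<phi> t b)" if "t \<in> S" "b < m t" for t b
  proof -
    have "\<exists>\<phi>. P t b \<phi>" using hermite_basis[of S t b m, OF fin that] unfolding P_def d_def .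
    then show ?thesis unfolding \<phi>_def by (rule someI_ex)
  qed
  have "d = m 0 + (\<Sum>t\<in>S-{0}. m t)" unfolding d_def using fin z by (simp add: sum.remove)
  then have d1: "d \<ge> 1" using m0 by simp
  have degphi: "degree (\<phi> t b) \<le> d - 1" if "t \<in> S" "b < m t" for t b
    using \<phi>[OF that] unfolding P_def by auto
  define c where "c = (\<lambda>t b. coeff (\<phi> t b) (d - 1))"
  have expand: "f = (\<Sum>t\<in>S. \<Sum>b<m t. smult (tc b f t) (\<phi> t b))" if "degree f < d" for f
  proof -
    define F where "F = (\<Sum>t\<in>S. \<Sum>b<m t. smult (tc b f t) (\<phi> t b))"
    have "degree F \<le> d - 1" unfolding F_def
      by (intro degree_sum_le fin finite_lessThan order.trans[OF degree_smult_le] degphi) auto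
    then have "degree F < d" using d1 by linarith
    then have "degree (f - F) < d" using that by (simp add: degree_diff_less)
    moreover have "tc g (f - F) u = 0" if "u \<in> S" "g < m u" for u g
    proof -
      have "tc g F u = (\<Sum>t\<in>S. \<Sum>b<m t. tc b f t * (if u = t \<and> g = b then 1 else 0))"
        unfolding F_def using \<phi> that unfolding P_def by (simp add: tc_sum tc_smult)
      also have "\<dots> = (\<Sum>t\<in>S. if t = u then tc g f u else 0)"
        using that by (intro sum.cong refl) (auto simp: if_distrib cong: if_cong)
      also have "\<dots> = tc g f u" using that fin by simp
      finally show ?thesis by (simp add: tc_diff)
    qed
    ultimately have "f - F = 0" using fin unfolding d_def by (intro zero_data[where m=m]) auto
    then show ?thesis by (simp add: F_def)
  qed
  have coeff_expand: "coeff f (d - 1) = (\<Sum>t\<in>S. \<Sum>b<m t. c t b * tc b f t)" if "degree f < d" for f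
    by (subst expand[OF that]) (simp add: coeff_sum c_def mult.commute)
  have "(\<Sum>t\<in>S. \<Sum>b<m t. c t b * (of_nat (e choose b) * t ^ (e - b))) = 0" if "Suc e < d" for e
  proof -
    have "coeff (monom (1::'a) e) (d - 1) = 0" using that by simp
    moreover have "degree (monom (1::'a) e) < d" using that by (simp add: degree_monom_eq)
    ultimately show ?thesis using coeff_expand[of "monom 1 e"] by (simp add: tc_monom)
  qed
  moreover have "c 0 0 \<noteq> 0"
  proof -
    define h where "h = (\<Prod>u\<in>S-{0}. [:-u,1::'a:] ^ (m u))"
    have degh: "degree h = d - 1" unfolding h_def d_def using fin z m0
      by (simp add: degree_prod_lin sum.remove)
    have lch: "lead_coeff h = 1" unfolding h_def by (simp add: lead_coeff_prod lead_coeff_power)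
    have h0: "poly h 0 \<noteq> 0" unfolding h_def using fin by (simp add: poly_prod)
    have "coeff h (d - 1) = (\<Sum>t\<in>S. \<Sum>b<m t. c t b * tc b h t)"
      using degh d1 by (intro coeff_expand) simp
    also have "\<dots> = (\<Sum>t\<in>S. if t = 0 then c 0 0 * poly h 0 else 0)"
    proof (intro sum.cong refl)
      fix t assume t: "t \<in> S"
      show "(\<Sum>b<m t. c t b * tc b h t) = (if t = 0 then c 0 0 * poly h 0 else 0)"
      proof (cases "t = 0")
        case True then show ?thesis using m0 by (simp add: tc_def poly_0_coeff_0 lessThan_Suc)
      next
        case False
        have "tc b h t = 0" if "b < m t" for b
        proof -
          have "[:-t,1:] ^ m t dvd h" unfolding h_def using t False fin by (intro dvd_prodI) auto
          then show ?thesis using that by (rule tc_dvd)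
        qed
        then show ?thesis using False by simp
      qed
    qed
    also have "\<dots> = c 0 0 * poly h 0" using fin z by simp
    finally have "c 0 0 * poly h 0 = 1" using lch degh by simp
    then show ?thesis by auto
  qed
  ultimately show ?thesis unfolding d_def by blast
qed



definition lf :: "nat \<Rightarrow> (nat \<Rightarrow> nat \<Rightarrow> 'a::field) \<Rightarrow> (nat \<Rightarrow> 'a) \<Rightarrow> nat \<Rightarrow> (nat \<Rightarrow> 'a) \<Rightarrow> 'a" where
  "lf n a b j s = (\<Sum>i<n. a j i * s i) - b j"

fun qc :: "nat \<Rightarrow> (nat \<Rightarrow> nat \<Rightarrow> 'a::field) \<Rightarrow> (nat \<Rightarrow> 'a) \<Rightarrow> (nat \<Rightarrow> 'a) \<Rightarrow> nat \<Rightarrow> (nat \<Rightarrow> nat) \<Rightarrow> 'a" where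
  "qc n a b s 0 \<alpha> = (if \<forall>i<n. \<alpha> i = 0 then 1 else 0)"
| "qc n a b s (Suc k) \<alpha> = lf n a b k s * qc n a b s k \<alpha> +
     (\<Sum>i<n. if \<alpha> i = 0 then 0 else a k i * qc n a b s k (\<alpha>(i := \<alpha> i - 1)))"

lemma sum_upd:
  fixes \<alpha> :: "nat \<Rightarrow> nat"
  assumes "i < n" "\<alpha> i \<noteq> 0"
  shows "(\<Sum>i'<n. (\<alpha>(i := \<alpha> i - 1)) i') + 1 = (\<Sum>i'<n. \<alpha> i')"
proof -
  have "(\<Sum>i'<n. \<alpha> i') = \<alpha> i + (\<Sum>i'\<in>{..<n}-{i}. \<alpha> i')"
    using assms by (subst sum.remove[of _ i]) auto
  moreover have "(\<Sum>i'<n. (\<alpha>(i := \<alpha> i - 1)) i') = (\<alpha> i - 1) + (\<Sum>i'\<in>{..<n}-{i}. \<alpha> i')"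
    using assms by (subst sum.remove[of _ i]) auto
  ultimately show ?thesis using assms by simp
qed

lemma qc_vanish:
  "(\<Sum>i<n. \<alpha> i) < card {j. j < k \<and> lf n a b j s = 0} \<Longrightarrow> qc n a b s k \<alpha> = 0"
proof (induction k arbitrary: \<alpha>)
  case 0 then show ?case by simp
next
  case (Suc k)
  have cardeq: "card {j. j < Suc k \<and> lf n a b j s = 0} =
     card {j. j < k \<and> lf n a b j s = 0} + (if lf n a b k s = 0 then 1 else 0)"
  proof -
    have "{j. j < Suc k \<and> lf n a b j s = 0} =
      {j. j < k \<and> lf n a b j s = 0} \<union> (if lf n a b k s = 0 then {k} else {})"
      by (auto simp: less_Suc_eq)
    then show ?thesis by (simp add: card_Un_disjoint)
  qed
  have second: "(\<Sum>i<n. if \<alpha> i = 0 then 0 else a k i * qc n a b s k (\<alpha>(i := \<alpha> i - 1))) = 0"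
  proof (intro sum.neutral ballI)
    fix i assume i: "i \<in> {..<n}"
    show "(if \<alpha> i = 0 then 0 else a k i * qc n a b s k (\<alpha>(i := \<alpha> i - 1))) = 0"
    proof (cases "\<alpha> i = 0")
      case False
      have "(\<Sum>i'<n. (\<alpha>(i := \<alpha> i - 1)) i') + 1 = (\<Sum>i'<n. \<alpha> i')"
        using i False by (intro sum_upd) auto
      then have "(\<Sum>i'<n. (\<alpha>(i := \<alpha> i - 1)) i') < card {j. j < k \<and> lf n a b j s = 0}"
        using Suc.prems cardeq by (auto split: if_splits)
      then show ?thesis using Suc.IH False by simp
    qed simp
  qed
  show ?case
  proof (cases "lf n a b k s = 0")
    case True then show ?thesis using second by simp
  next
    case False
    then have "qc n a b s k \<alpha> = 0" using Suc.prems cardeq by (intro Suc.IH) simp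
    then show ?thesis using second by simp
  qed
qed

lemma qc_big:
  "k < (\<Sum>i<n. \<alpha> i) \<Longrightarrow> qc n a b s k \<alpha> = 0"
proof (induction k arbitrary: \<alpha>)
  case 0
  then obtain i where "i < n" "\<alpha> i \<noteq> 0" by (metis lessThan_iff less_nat_zero_code sum.neutral)
  then show ?case by auto
next
  case (Suc k)
  have "qc n a b s k \<alpha> = 0" using Suc by simp
  moreover have "(\<Sum>i<n. if \<alpha> i = 0 then 0 else a k i * qc n a b s k (\<alpha>(i := \<alpha> i - 1))) = 0"
  proof (intro sum.neutral ballI)
    fix i assume i: "i \<in> {..<n}"
    show "(if \<alpha> i = 0 then 0 else a k i * qc n a b s k (\<alpha>(i := \<alpha> i - 1))) = 0"
    proof (cases "\<alpha> i = 0")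
      case False
      have "(\<Sum>i'<n. (\<alpha>(i := \<alpha> i - 1)) i') + 1 = (\<Sum>i'<n. \<alpha> i')"
        using i False by (intro sum_upd) auto
      then show ?thesis using Suc False by simp
    qed simp
  qed
  ultimately show ?case by simp
qed

lemma qc_zero: "(\<forall>i<n. \<alpha> i = 0) \<Longrightarrow> qc n a b s k \<alpha> = (\<Prod>j<k. lf n a b j s)"
  by (induction k) auto

definition Bf :: "nat \<Rightarrow> (nat \<Rightarrow> 'a::field) \<Rightarrow> (nat \<Rightarrow> nat) \<Rightarrow> (nat \<Rightarrow> nat) \<Rightarrow> 'a" where
  "Bf n s e \<alpha> = (\<Prod>i<n. of_nat (e i choose \<alpha> i) * s i ^ (e i - \<alpha> i))"

lemma pascal1:
  "of_nat (Suc e choose a) * (x::'a::field) ^ (Suc e - a) =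
    (if a = 0 then 0 else of_nat (e choose (a - 1)) * x ^ (e - (a - 1))) + x * (of_nat (e choose a) * x ^ (e - a))"
proof (cases a)
  case 0 then show ?thesis by simp
next
  case (Suc a')
  have "x ^ (e - a') * of_nat (e choose Suc a') = x * (x ^ (e - Suc a') * of_nat (e choose Suc a'))"
  proof (cases "Suc a' \<le> e")
    case True
    then have "e - a' = Suc (e - Suc a')" by simp
    then show ?thesis by simp
  next
    case False then show ?thesis by (simp add: binomial_eq_0)
  qed
  then show ?thesis using Suc by (simp add: algebra_simps)
qed

lemma Bf_pascal:
  assumes "i < n"
  shows "Bf n s (e(i := e i + 1)) \<alpha> =
    (if \<alpha> i = 0 then 0 else Bf n s e (\<alpha>(i := \<alpha> i - 1))) + s i * Bf n s e \<alpha>"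
proof -
  define R where "R = (\<Prod>i'\<in>{..<n}-{i}. of_nat (e i' choose \<alpha> i') * s i' ^ (e i' - \<alpha> i'))"
  have split: "Bf n s e' \<alpha>' = (of_nat (e' i choose \<alpha>' i) * s i ^ (e' i - \<alpha>' i)) *
      (\<Prod>i'\<in>{..<n}-{i}. of_nat (e' i' choose \<alpha>' i') * s i' ^ (e' i' - \<alpha>' i'))" for e' \<alpha>'
    unfolding Bf_def using assms by (subst prod.remove[of _ i]) auto
  have R1: "(\<Prod>i'\<in>{..<n}-{i}. of_nat ((e(i := e i + 1)) i' choose \<alpha> i') * s i' ^ ((e(i := e i + 1)) i' - \<alpha> i')) = R"
    unfolding R_def by (intro prod.cong) auto
  have R2: "(\<Prod>i'\<in>{..<n}-{i}. of_nat (e i' choose (\<alpha>(i := \<alpha> i - 1)) i') * s i' ^ (e i' - (\<alpha>(i := \<alpha> i - 1)) i')) = R"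
    unfolding R_def by (intro prod.cong) auto
  show ?thesis
    apply (simp only: split R1 R2 R_def[symmetric])
    using pascal1[of "e i" "\<alpha> i" "s i"] by (simp add: algebra_simps)
qed

lemma prod_sum_dep:
  fixes f :: "'i \<Rightarrow> 'x \<Rightarrow> 'y \<Rightarrow> 'c::comm_semiring_1"
  assumes "finite I" "\<And>i. i \<in> I \<Longrightarrow> finite (S i)" "\<And>i t. i \<in> I \<Longrightarrow> t \<in> S i \<Longrightarrow> finite (M i t)"
  shows "(\<Sum>s\<in>PiE I S. \<Sum>\<alpha>\<in>PiE I (\<lambda>i. M i (s i)). \<Prod>i\<in>I. f i (s i) (\<alpha> i)) =
         (\<Prod>i\<in>I. \<Sum>t\<in>S i. \<Sum>b\<in>M i t. f i t b)"
proof -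
  have "(\<Prod>i\<in>I. \<Sum>t\<in>S i. \<Sum>b\<in>M i t. f i t b) = (\<Prod>i\<in>I. \<Sum>p\<in>Sigma (S i) (M i). f i (fst p) (snd p))"
    using assms by (intro prod.cong refl) (simp add: sum.Sigma split_beta)
  also have "\<dots> = (\<Sum>g\<in>PiE I (\<lambda>i. Sigma (S i) (M i)). \<Prod>i\<in>I. f i (fst (g i)) (snd (g i)))"
    using assms by (intro prod_sum_PiE) auto
  also have "\<dots> = (\<Sum>(s,\<alpha>)\<in>Sigma (PiE I S) (\<lambda>s. PiE I (\<lambda>i. M i (s i))). \<Prod>i\<in>I. f i (s i) (\<alpha> i))"
    by (rule sum.reindex_bij_witness[of _ "\<lambda>(s,\<alpha>). \<lambda>i\<in>I. (s i, \<alpha> i)" "\<lambda>g. (\<lambda>i\<in>I. fst (g i), \<lambda>i\<in>I. snd (g i))"])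
      (auto simp: PiE_def extensional_def Pi_def fun_eq_iff)
  also have "\<dots> = (\<Sum>s\<in>PiE I S. \<Sum>\<alpha>\<in>PiE I (\<lambda>i. M i (s i)). \<Prod>i\<in>I. f i (s i) (\<alpha> i))"
    using assms by (subst sum.Sigma[symmetric]) (auto intro!: finite_PiE)
  finally show ?thesis ..
qed

lemma reindex_shift:
  assumes i: "i < n" and kK: "k < K"
  shows "(\<Sum>e\<in>PiE {..<n} (\<lambda>_. {..K}). (if e i = 0 then 0 else qc n a b z k (e(i := e i - 1)) * Bf n s e \<alpha>))
       = (\<Sum>e\<in>PiE {..<n} (\<lambda>_. {..K}). qc n a b z k e * Bf n s (e(i := e i + 1)) \<alpha>)"
    (is "?L = ?R")
proof -
  define E where "E = PiE {..<n} (\<lambda>_::nat. {..K})"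
  have finE: "finite E" unfolding E_def by (intro finite_PiE) auto
  have "?L = (\<Sum>e\<in>{e\<in>E. e i \<noteq> 0}. qc n a b z k (e(i := e i - 1)) * Bf n s e \<alpha>)"
  proof -
    have "?L = (\<Sum>e\<in>E. if e i \<noteq> 0 then qc n a b z k (e(i := e i - 1)) * Bf n s e \<alpha> else 0)"
      unfolding E_def by (intro sum.cong) auto
    also have "\<dots> = (\<Sum>e\<in>{e\<in>E. e i \<noteq> 0}. qc n a b z k (e(i := e i - 1)) * Bf n s e \<alpha>)"
      by (rule sum.inter_filter[symmetric, OF finE])
    finally show ?thesis .
  qed
  also have "\<dots> = (\<Sum>e\<in>{e\<in>E. e i < K}. qc n a b z k e * Bf n s (e(i := e i + 1)) \<alpha>)"
    by (rule sum.reindex_bij_witness[of _ "\<lambda>e. e(i := e i + 1)" "\<lambda>e. e(i := e i - 1)"])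
       (use i in \<open>auto simp: E_def PiE_def extensional_def Pi_def\<close>)
  also have "\<dots> = (\<Sum>e\<in>E. qc n a b z k e * Bf n s (e(i := e i + 1)) \<alpha>)"
  proof (rule sum.mono_neutral_left[OF finE])
    show "\<forall>e\<in>E - {e \<in> E. e i < K}. qc n a b z k e * Bf n s (e(i := e i + 1)) \<alpha> = 0"
    proof
      fix e assume e: "e \<in> E - {e \<in> E. e i < K}"
      then have "e i = K" using i unfolding E_def by (auto simp: PiE_def Pi_def)
      moreover have "e i \<le> (\<Sum>i'<n. e i')" using i by (intro member_le_sum) auto
      ultimately have "qc n a b z k e = 0" using kK by (intro qc_big) simp
      then show "qc n a b z k e * Bf n s (e(i := e i + 1)) \<alpha> = 0" by simp
    qed
  qed auto
  finally show ?thesis unfolding E_def .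
qed

lemma shift:
  assumes "k \<le> K"
  shows "qc n a b s k \<alpha> = (\<Sum>e\<in>PiE {..<n} (\<lambda>_. {..K}). qc n a b (\<lambda>_. 0) k e * Bf n s e \<alpha>)"
  using assms
proof (induction k arbitrary: \<alpha>)
  case 0
  define z0 where "z0 = (\<lambda>i\<in>{..<n}. 0::nat)"
  have z0E: "z0 \<in> PiE {..<n} (\<lambda>_. {..K})" unfolding z0_def by auto
  have "(\<Sum>e\<in>PiE {..<n} (\<lambda>_. {..K}). qc n a b (\<lambda>_. 0) 0 e * Bf n s e \<alpha>) =
        (\<Sum>e\<in>PiE {..<n} (\<lambda>_. {..K}). if e = z0 then Bf n s z0 \<alpha> else 0)"
  proof (intro sum.cong refl)
    fix e assume e: "e \<in> PiE {..<n} (\<lambda>_. {..K})"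
    have "(\<forall>i<n. e i = 0) \<longleftrightarrow> e = z0"
      using e unfolding z0_def by (auto simp: PiE_def extensional_def fun_eq_iff)
    then show "qc n a b (\<lambda>_. 0) 0 e * Bf n s e \<alpha> = (if e = z0 then Bf n s z0 \<alpha> else 0)" by auto
  qed
  also have "\<dots> = Bf n s z0 \<alpha>" using z0E by (simp add: finite_PiE)
  also have "\<dots> = (\<Prod>i<n. if \<alpha> i = 0 then 1 else 0)"
    unfolding Bf_def z0_def by (intro prod.cong refl) (auto simp: binomial_eq_0)
  also have "\<dots> = qc n a b s 0 \<alpha>"
    by (auto simp: prod.neutral intro!: prod_zero)
  finally show ?case ..
next
  case (Suc k)
  define E where "E = PiE {..<n} (\<lambda>_::nat. {..K})"
  define L where "L = (\<lambda>\<alpha>. \<Sum>e\<in>E. qc n a b (\<lambda>_. 0) k e * Bf n s e \<alpha>)"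
  have IH: "qc n a b s k \<alpha>' = L \<alpha>'" for \<alpha>' using Suc unfolding L_def E_def by simp
  have lf0: "lf n a b k (\<lambda>_. 0) = - b k" by (simp add: lf_def)
  have "(\<Sum>e\<in>E. qc n a b (\<lambda>_. 0) (Suc k) e * Bf n s e \<alpha>) =
     - b k * L \<alpha> + (\<Sum>i<n. a k i * (\<Sum>e\<in>E. (if e i = 0 then 0 else qc n a b (\<lambda>_. 0) k (e(i := e i - 1)) * Bf n s e \<alpha>)))"
  proof -
    have per: "qc n a b (\<lambda>_. 0) (Suc k) e * Bf n s e \<alpha> = - b k * (qc n a b (\<lambda>_. 0) k e * Bf n s e \<alpha>) +
       (\<Sum>i<n. a k i * (if e i = 0 then 0 else qc n a b (\<lambda>_. 0) k (e(i := e i - 1)) * Bf n s e \<alpha>))" for e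
    proof -
      have "qc n a b (\<lambda>_. 0) (Suc k) e = - b k * qc n a b (\<lambda>_. 0) k e +
          (\<Sum>i<n. if e i = 0 then 0 else a k i * qc n a b (\<lambda>_. 0) k (e(i := e i - 1)))"
        by (simp add: lf0)
      then show ?thesis
        by (simp add: left_diff_distrib sum_distrib_right mult.assoc) (intro sum.cong refl, simp)
    qed
    have "(\<Sum>e\<in>E. qc n a b (\<lambda>_. 0) (Suc k) e * Bf n s e \<alpha>) =
      (\<Sum>e\<in>E. - b k * (qc n a b (\<lambda>_. 0) k e * Bf n s e \<alpha>)) +
      (\<Sum>e\<in>E. \<Sum>i<n. a k i * (if e i = 0 then 0 else qc n a b (\<lambda>_. 0) k (e(i := e i - 1)) * Bf n s e \<alpha>))"
      unfolding per by (rule sum.distrib)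
    also have "(\<Sum>e\<in>E. \<Sum>i<n. a k i * (if e i = 0 then 0 else qc n a b (\<lambda>_. 0) k (e(i := e i - 1)) * Bf n s e \<alpha>)) =
      (\<Sum>i<n. a k i * (\<Sum>e\<in>E. (if e i = 0 then 0 else qc n a b (\<lambda>_. 0) k (e(i := e i - 1)) * Bf n s e \<alpha>)))"
      by (subst sum.swap) (simp add: sum_distrib_left)
    also have "(\<Sum>e\<in>E. - b k * (qc n a b (\<lambda>_. 0) k e * Bf n s e \<alpha>)) = - b k * L \<alpha>"
      unfolding L_def by (simp add: sum_distrib_left)
    finally show ?thesis .
  qed
  also have "\<dots> = - b k * L \<alpha> + (\<Sum>i<n. a k i * ((if \<alpha> i = 0 then 0 else L (\<alpha>(i := \<alpha> i - 1))) + s i * L \<alpha>))"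
  proof -
    have "(\<Sum>e\<in>E. (if e i = 0 then 0 else qc n a b (\<lambda>_. 0) k (e(i := e i - 1)) * Bf n s e \<alpha>)) =
        (if \<alpha> i = 0 then 0 else L (\<alpha>(i := \<alpha> i - 1))) + s i * L \<alpha>" if i: "i < n" for i
    proof -
      have "(\<Sum>e\<in>E. (if e i = 0 then 0 else qc n a b (\<lambda>_. 0) k (e(i := e i - 1)) * Bf n s e \<alpha>)) =
            (\<Sum>e\<in>E. qc n a b (\<lambda>_. 0) k e * Bf n s (e(i := e i + 1)) \<alpha>)"
        unfolding E_def using i Suc.prems by (intro reindex_shift) auto
      also have "\<dots> = (\<Sum>e\<in>E. qc n a b (\<lambda>_. 0) k e * ((if \<alpha> i = 0 then 0 else Bf n s e (\<alpha>(i := \<alpha> i - 1))) + s i * Bf n s e \<alpha>))"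
        by (intro sum.cong refl) (simp only: Bf_pascal[OF i])
      also have "\<dots> = (if \<alpha> i = 0 then 0 else L (\<alpha>(i := \<alpha> i - 1))) + s i * L \<alpha>"
        unfolding L_def by (simp add: algebra_simps sum.distrib sum_distrib_left)
      finally show ?thesis .
    qed
    then show ?thesis by simp
  qed
  also have "(\<Sum>i<n. a k i * ((if \<alpha> i = 0 then 0 else L (\<alpha>(i := \<alpha> i - 1))) + s i * L \<alpha>)) =
      (\<Sum>i<n. if \<alpha> i = 0 then 0 else a k i * L (\<alpha>(i := \<alpha> i - 1))) + (\<Sum>i<n. a k i * s i) * L \<alpha>"
    unfolding distrib_left sum.distrib sum_distrib_right
    by (intro arg_cong2[where f="(+)"] sum.cong) (auto simp: mult_ac)
  also have "- b k * L \<alpha> + (\<dots>) = qc n a b s (Suc k) \<alpha>"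
    by (simp only: qc.simps IH lf_def) (simp add: algebra_simps)
  finally show ?case unfolding E_def ..
qed

theorem theorem5:
  fixes n k :: nat
    and S :: "nat \<Rightarrow> 'a::field set"
    and m :: "nat \<Rightarrow> 'a \<Rightarrow> nat"
    and a :: "nat \<Rightarrow> nat \<Rightarrow> 'a"
    and b :: "nat \<Rightarrow> 'a"
  assumes fin: "\<And>i. i < n \<Longrightarrow> finite (S i)"
    and zero_in: "\<And>i. i < n \<Longrightarrow> 0 \<in> S i"
    and mult_pos: "\<And>i s. i < n \<Longrightarrow> s \<in> S i \<Longrightarrow> m i s \<ge> 1"
    and mult_zero: "\<And>i. i < n \<Longrightarrow> m i 0 = 1"
    and hyp: "\<And>j. j < k \<Longrightarrow> is_hyperplane n (a j)"
    and cover: "\<And>s. s \<in> (PiE {..<n} S) - {restrict (\<lambda>_. 0) {..<n}} \<Longrightarrow>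
        int (card {j. j < k \<and> on_hyperplane n (a j) (b j) s})
          \<ge> int (\<Sum>i<n. m i (s i)) - int n + 1"
    and avoid: "\<And>j. j < k \<Longrightarrow> \<not> on_hyperplane n (a j) (b j) (restrict (\<lambda>_. 0) {..<n})"
  shows "int k \<ge> int (\<Sum>i<n. \<Sum>s\<in>S i. m i s) - int n"
proof (rule ccontr)
  assume neg: "\<not> int k \<ge> int (\<Sum>i<n. \<Sum>s\<in>S i. m i s) - int n"
  define d where "d i = (\<Sum>s\<in>S i. m i s)" for i
  have d1: "d i \<ge> 1" if "i < n" for i
  proof -
    have "d i = m i 0 + (\<Sum>t\<in>S i - {0}. m i t)" unfolding d_def using fin[OF that] zero_in[OF that]
      by (simp add: sum.remove)
    then show ?thesis using mult_zero[OF that] by simp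
  qed
  have "(\<Sum>i<n. d i - 1) + n = (\<Sum>i<n. d i)"
  proof -
    have "(\<Sum>i<n. d i - 1) + n = (\<Sum>i<n. (d i - 1) + 1)" by (simp only: sum.distrib) simp
    also have "\<dots> = (\<Sum>i<n. d i)" using d1 by (intro sum.cong refl) (simp add: Suc_le_eq)
    finally show ?thesis .
  qed
  then have klt: "k < (\<Sum>i<n. d i - 1)" using neg unfolding d_def by linarith
  have "\<forall>i. \<exists>ci. i < n \<longrightarrow> ci 0 0 \<noteq> 0 \<and> (\<forall>e. Suc e < d i \<longrightarrow>
      (\<Sum>t\<in>S i. \<Sum>b<m i t. ci t b * (of_nat (e choose b) * t ^ (e - b))) = 0)"
  proof
    fix i
    show "\<exists>ci. i < n \<longrightarrow> ci 0 0 \<noteq> 0 \<and> (\<forall>e. Suc e < d i \<longrightarrow>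
      (\<Sum>t\<in>S i. \<Sum>b<m i t. ci t b * (of_nat (e choose b) * t ^ (e - b))) = 0)"
    proof (cases "i < n")
      case True
      then show ?thesis unfolding d_def
        using univ_functional[of "S i" "m i", OF fin[OF True] zero_in[OF True] mult_zero[OF True]] by blast
    qed simp
  qed
  from choice[OF this] obtain c where c0: "\<forall>i. i < n \<longrightarrow> c i 0 0 \<noteq> 0 \<and> (\<forall>e. Suc e < d i \<longrightarrow>
      (\<Sum>t\<in>S i. \<Sum>b<m i t. c i t b * (of_nat (e choose b) * t ^ (e - b))) = 0)"
    by blast
  then have c: "\<And>i. i < n \<Longrightarrow> c i 0 0 \<noteq> 0 \<and> (\<forall>e. Suc e < d i \<longrightarrow>
      (\<Sum>t\<in>S i. \<Sum>b<m i t. c i t b * (of_nat (e choose b) * t ^ (e - b))) = 0)"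
    by blast
  define G where "G = PiE {..<n} S"
  define box where "box s = PiE {..<n} (\<lambda>i. {..<m i (s i)})" for s
  define C where "C s \<alpha> = (\<Prod>i<n. c i (s i) (\<alpha> i))" for s \<alpha>
  define T where "T = (\<Sum>s\<in>G. \<Sum>\<alpha>\<in>box s. C s \<alpha> * qc n a b s k \<alpha>)"
  define z0 where "z0 = restrict (\<lambda>_. 0::'a) {..<n}"
  have finG: "finite G" unfolding G_def using fin by (intro finite_PiE) auto
  have finbox: "finite (box s)" for s unfolding box_def by (intro finite_PiE) auto
  have "T \<noteq> 0"
  proof -
    have z0G: "z0 \<in> G" unfolding G_def z0_def using zero_in by auto
    have vanish: "qc n a b s k \<alpha> = 0" if s: "s \<in> G" "s \<noteq> z0" and \<alpha>: "\<alpha> \<in> box s" for s \<alpha>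
    proof (rule qc_vanish)
      have seteq: "{j. j < k \<and> lf n a b j s = 0} = {j. j < k \<and> on_hyperplane n (a j) (b j) s}"
        by (auto simp: lf_def on_hyperplane_def)
      have cov: "int (card {j. j < k \<and> on_hyperplane n (a j) (b j) s}) \<ge> int (\<Sum>i<n. m i (s i)) - int n + 1"
        using cover s unfolding G_def z0_def by blast
      have "(\<Sum>i<n. \<alpha> i + 1) \<le> (\<Sum>i<n. m i (s i))"
        using \<alpha> unfolding box_def by (intro sum_mono) (auto simp: PiE_def Pi_def Suc_le_eq)
      moreover have "(\<Sum>i<n. \<alpha> i + 1) = (\<Sum>i<n. \<alpha> i) + n" by (simp only: sum.distrib) simp
      ultimately have "(\<Sum>i<n. \<alpha> i) + n \<le> (\<Sum>i<n. m i (s i))" by simp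
      then show "(\<Sum>i<n. \<alpha> i) < card {j. j < k \<and> lf n a b j s = 0}"
        using cov unfolding seteq by linarith
    qed
    have "T = (\<Sum>\<alpha>\<in>box z0. C z0 \<alpha> * qc n a b z0 k \<alpha>)"
    proof -
      have "T = (\<Sum>\<alpha>\<in>box z0. C z0 \<alpha> * qc n a b z0 k \<alpha>) +
          (\<Sum>s\<in>G - {z0}. \<Sum>\<alpha>\<in>box s. C s \<alpha> * qc n a b s k \<alpha>)"
        unfolding T_def using finG z0G by (simp add: sum.remove)
      also have "(\<Sum>s\<in>G - {z0}. \<Sum>\<alpha>\<in>box s. C s \<alpha> * qc n a b s k \<alpha>) = 0"
        using vanish by (intro sum.neutral ballI) auto
      finally show ?thesis by simp
    qed
    also have "box z0 = {restrict (\<lambda>_. 0::nat) {..<n}}"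
      unfolding box_def z0_def using mult_zero
      by (auto simp: PiE_def Pi_def extensional_def fun_eq_iff)
    also have "(\<Sum>\<alpha>\<in>{restrict (\<lambda>_. 0::nat) {..<n}}. C z0 \<alpha> * qc n a b z0 k \<alpha>) =
        (\<Prod>i<n. c i 0 0) * (\<Prod>j<k. - b j)"
    proof -
      have "qc n a b z0 k (restrict (\<lambda>_. 0::nat) {..<n}) = (\<Prod>j<k. lf n a b j z0)"
        by (intro qc_zero) auto
      also have "\<dots> = (\<Prod>j<k. - b j)" unfolding lf_def z0_def by simp
      finally show ?thesis unfolding C_def z0_def by simp
    qed
    also have "\<dots> \<noteq> 0"
    proof -
      have "b j \<noteq> 0" if "j < k" for j
        using avoid[OF that] by (simp add: on_hyperplane_def)
      then show ?thesis using c by simp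
    qed
    finally show ?thesis .
  qed
  moreover have "T = 0"
  proof -
    define E where "E = PiE {..<n} (\<lambda>_::nat. {..k})"
    define q where "q e = qc n a b (\<lambda>_. 0) k e" for e
    have finE: "finite E" unfolding E_def by (intro finite_PiE) auto
    have "T = (\<Sum>s\<in>G. \<Sum>\<alpha>\<in>box s. \<Sum>e\<in>E. q e * (C s \<alpha> * Bf n s e \<alpha>))"
      unfolding T_def E_def q_def
      by (subst shift[of k k]) (simp_all add: sum_distrib_left mult_ac)
    also have "\<dots> = (\<Sum>s\<in>G. \<Sum>e\<in>E. \<Sum>\<alpha>\<in>box s. q e * (C s \<alpha> * Bf n s e \<alpha>))"
      by (intro sum.cong refl sum.swap)
    also have "\<dots> = (\<Sum>e\<in>E. \<Sum>s\<in>G. \<Sum>\<alpha>\<in>box s. q e * (C s \<alpha> * Bf n s e \<alpha>))"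
      by (rule sum.swap)
    also have "\<dots> = (\<Sum>e\<in>E. q e * (\<Sum>s\<in>G. \<Sum>\<alpha>\<in>box s.
        \<Prod>i<n. c i (s i) (\<alpha> i) * (of_nat (e i choose \<alpha> i) * s i ^ (e i - \<alpha> i))))"
      unfolding C_def Bf_def by (simp add: sum_distrib_left prod.distrib)
    also have "\<dots> = (\<Sum>e\<in>E. q e * (\<Prod>i<n. \<Sum>t\<in>S i. \<Sum>b<m i t.
        c i t b * (of_nat (e i choose b) * t ^ (e i - b))))"
      unfolding G_def box_def using fin
      by (subst prod_sum_dep) auto
    also have "\<dots> = 0"
    proof (intro sum.neutral ballI)
      fix e assume e: "e \<in> E"
      show "q e * (\<Prod>i<n. \<Sum>t\<in>S i. \<Sum>b<m i t. c i t b * (of_nat (e i choose b) * t ^ (e i - b))) = 0"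
      proof (cases "q e = 0")
        case False
        have "(\<Sum>i<n. e i) \<le> k"
        proof (rule ccontr)
          assume "\<not> (\<Sum>i<n. e i) \<le> k"
          then have "q e = 0" unfolding q_def by (intro qc_big) simp
          then show False using False by simp
        qed
        then obtain i where i: "i < n" "Suc (e i) < d i"
        proof -
          assume *: "\<And>i. i < n \<Longrightarrow> Suc (e i) < d i \<Longrightarrow> thesis"
          show thesis
          proof (rule ccontr)
            assume "\<not> thesis"
            then have "\<forall>i<n. d i - 1 \<le> e i" using * by fastforce
            then have "(\<Sum>i<n. d i - 1) \<le> (\<Sum>i<n. e i)" by (intro sum_mono) auto
            then show False using klt \<open>(\<Sum>i<n. e i) \<le> k\<close> by linarith
          qed
        qed
        then have "(\<Sum>t\<in>S i. \<Sum>b<m i t. c i t b * (of_nat (e i choose b) * t ^ (e i - b))) = 0"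
          using c by blast
        then have "(\<Prod>i<n. \<Sum>t\<in>S i. \<Sum>b<m i t. c i t b * (of_nat (e i choose b) * t ^ (e i - b))) = 0"
          using i by (intro prod_zero) auto
        then show ?thesis by simp
      qed simp
    qed
    finally show ?thesis .
  qed
  ultimately show False by simp
qed

end
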